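(* There is an infinite family of directed graphs (with unit arc lengths) such that, with $n$ the number of vertices, the greedy algorithm g-HHL finds a hierarchical hub labeling of size $\Omega(n^{3/2})$ while the optimal hierarchical hub labeling has size $O(n)$.
   Context: For a directed graph $G=(V,E)$, $n=|V|$, a hub labeling assigns forward and backward labels $L_f(v),L_b(v)\subseteq V$ such that for every ordered pair $(u,w)$ with $w$ reachable from $u$, $L_f(u)\cap L_b(w)$ contains a vertex on a shortest $u$–$w$ path; its size is $\sum_v(|L_f(v)|+|L_b(v)|)$. It is hierarchical (HHL) if there is a bijection $\pi:V\to\{1,\dots,n\}$ with $u\in L_f(v)\cup L_b(v)\Rightarrow\pi(u)\le\pi(v)$. g-HHL: start with empty labels; $U$ is the set of uncovered pairs. For each not-yet-selected vertex $v$, the center graph is the bipartite graph with two copies $X,Y$ of $V$ and an arc $(u,w)$ for each $(u,w)\in U$ having a shortest $u$–$w$ path through $v$. Each iteration selects a not-yet-selected $v$ whose center graph has the most edges and adds $v$ to $L_f(u)$ for all non-isolated $u\in X$ and to $L_b(w)$ for all non-isolated $w\in Y$, until all pairs are covered. *)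

theory Defs
  imports Complex_Main
begin

text \<open>Directed graph given by a finite vertex set V and an arc set E \<subseteq> V \<times> V;
  all arcs have unit length, so path length = number of arcs.\<close>

definition walk :: "('a \<times> 'a) set \<Rightarrow> 'a list \<Rightarrow> bool" where
  "walk E p \<longleftrightarrow> p \<noteq> [] \<and> (\<forall>i. Suc i < length p \<longrightarrow> (p ! i, p ! Suc i) \<in> E)"

definition reach :: "('a \<times> 'a) set \<Rightarrow> 'a \<Rightarrow> 'a \<Rightarrow> bool" where
  "reach E u w \<longleftrightarrow> (\<exists>p. walk E p \<and> hd p = u \<and> last p = w)"

definition spath :: "('a \<times> 'a) set \<Rightarrow> 'a \<Rightarrow> 'a \<Rightarrow> 'a list \<Rightarrow> bool" where
  "spath E u w p \<longleftrightarrow> walk E p \<and> hd p = u \<and> last p = w \<and>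
     (\<forall>q. walk E q \<and> hd q = u \<and> last q = w \<longrightarrow> length p \<le> length q)"

definition on_sp :: "('a \<times> 'a) set \<Rightarrow> 'a \<Rightarrow> 'a \<Rightarrow> 'a \<Rightarrow> bool" where
  "on_sp E u w v \<longleftrightarrow> (\<exists>p. spath E u w p \<and> v \<in> set p)"

definition covered :: "('a \<times> 'a) set \<Rightarrow> ('a \<Rightarrow> 'a set) \<Rightarrow> ('a \<Rightarrow> 'a set) \<Rightarrow> 'a \<Rightarrow> 'a \<Rightarrow> bool" where
  "covered E Lf Lb u w \<longleftrightarrow> (\<exists>h \<in> Lf u \<inter> Lb w. on_sp E u w h)"

definition is_HL :: "'a set \<Rightarrow> ('a \<times> 'a) set \<Rightarrow> ('a \<Rightarrow> 'a set) \<Rightarrow> ('a \<Rightarrow> 'a set) \<Rightarrow> bool" where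
  "is_HL V E Lf Lb \<longleftrightarrow> (\<forall>v\<in>V. Lf v \<subseteq> V \<and> Lb v \<subseteq> V) \<and>
     (\<forall>u\<in>V. \<forall>w\<in>V. reach E u w \<longrightarrow> covered E Lf Lb u w)"

definition hl_size :: "'a set \<Rightarrow> ('a \<Rightarrow> 'a set) \<Rightarrow> ('a \<Rightarrow> 'a set) \<Rightarrow> nat" where
  "hl_size V Lf Lb = (\<Sum>v\<in>V. card (Lf v) + card (Lb v))"

definition is_HHL :: "'a set \<Rightarrow> ('a \<times> 'a) set \<Rightarrow> ('a \<Rightarrow> 'a set) \<Rightarrow> ('a \<Rightarrow> 'a set) \<Rightarrow> bool" where
  "is_HHL V E Lf Lb \<longleftrightarrow> is_HL V E Lf Lb \<and>
     (\<exists>\<pi>. bij_betw \<pi> V {1..card V} \<and> (\<forall>v\<in>V. \<forall>u \<in> Lf v \<union> Lb v. \<pi> u \<le> \<pi> v))"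

definition uncovered :: "'a set \<Rightarrow> ('a \<times> 'a) set \<Rightarrow> ('a \<Rightarrow> 'a set) \<Rightarrow> ('a \<Rightarrow> 'a set) \<Rightarrow> ('a \<times> 'a) set" where
  "uncovered V E Lf Lb = {(u, w). u \<in> V \<and> w \<in> V \<and> reach E u w \<and> \<not> covered E Lf Lb u w}"

definition center_edges :: "'a set \<Rightarrow> ('a \<times> 'a) set \<Rightarrow> ('a \<Rightarrow> 'a set) \<Rightarrow> ('a \<Rightarrow> 'a set) \<Rightarrow> 'a \<Rightarrow> ('a \<times> 'a) set" where
  "center_edges V E Lf Lb v = {(u, w) \<in> uncovered V E Lf Lb. on_sp E u w v}"

type_synonym 'a ghhl_state = "'a set \<times> ('a \<Rightarrow> 'a set) \<times> ('a \<Rightarrow> 'a set)"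

text \<open>One iteration: S = already selected vertices. Ties in the greedy choice are
  arbitrary (any maximiser may be chosen).\<close>
definition ghhl_step :: "'a set \<Rightarrow> ('a \<times> 'a) set \<Rightarrow> 'a ghhl_state \<Rightarrow> 'a ghhl_state \<Rightarrow> bool" where
  "ghhl_step V E st st' \<longleftrightarrow>
     (case st of (S, Lf, Lb) \<Rightarrow>
       uncovered V E Lf Lb \<noteq> {} \<and>
       (\<exists>v \<in> V - S.
          (\<forall>x \<in> V - S. card (center_edges V E Lf Lb x) \<le> card (center_edges V E Lf Lb v)) \<and>
          st' = (insert v S,
                 (\<lambda>u. if u \<in> fst ` center_edges V E Lf Lb v then insert v (Lf u) else Lf u),
                 (\<lambda>w. if w \<in> snd ` center_edges V E Lf Lb v then insert v (Lb w) else Lb w))))"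

definition ghhl_output :: "'a set \<Rightarrow> ('a \<times> 'a) set \<Rightarrow> ('a \<Rightarrow> 'a set) \<Rightarrow> ('a \<Rightarrow> 'a set) \<Rightarrow> bool" where
  "ghhl_output V E Lf Lb \<longleftrightarrow>
     (\<exists>S. (ghhl_step V E)\<^sup>*\<^sup>* ({}, (\<lambda>_. {}), (\<lambda>_. {})) (S, Lf, Lb) \<and> uncovered V E Lf Lb = {})"

end

theory Submission
  imports Defs
begin


lemma walk_rtrancl:
  assumes "walk E p" "i \<le> j" "j < length p"
  shows "(p!i, p!j) \<in> E\<^sup>*"
  using assms(2,3)
proof (induction j)
  case 0 then show ?case by simp
next
  case (Suc j)
  show ?case
  proof (cases "i = Suc j")
    case True then show ?thesis by simp
  next
    case False
    then have "i \<le> j" using Suc.prems by simp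
    then have "(p!i, p!j) \<in> E\<^sup>*" using Suc by simp
    moreover have "(p!j, p!Suc j) \<in> E" using assms(1) Suc.prems unfolding walk_def by blast
    ultimately show ?thesis by (rule rtrancl_into_rtrancl)
  qed
qed

lemma reach_rtrancl: "reach E u w \<Longrightarrow> (u,w) \<in> E\<^sup>*"
proof -
  assume "reach E u w"
  then obtain p where p: "walk E p" "hd p = u" "last p = w" unfolding reach_def by blast
  then have ne: "p \<noteq> []" unfolding walk_def by simp
  have "(p!0, p!(length p - 1)) \<in> E\<^sup>*" using walk_rtrancl[OF p(1)] ne by simp
  then show ?thesis using p ne by (simp add: hd_conv_nth last_conv_nth)
qed

lemma on_sp_rtrancl: "on_sp E u w v \<Longrightarrow> (u,v) \<in> E\<^sup>* \<and> (v,w) \<in> E\<^sup>*"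
proof -
  assume "on_sp E u w v"
  then obtain p where p: "spath E u w p" "v \<in> set p" unfolding on_sp_def by blast
  then have w: "walk E p" "hd p = u" "last p = w" unfolding spath_def by auto
  then have ne: "p \<noteq> []" unfolding walk_def by simp
  from p(2) obtain i where i: "i < length p" "p!i = v" by (auto simp: in_set_conv_nth)
  have "(p!0, p!i) \<in> E\<^sup>*" using walk_rtrancl[OF w(1), of 0 i] i by simp
  moreover have "(p!i, p!(length p - 1)) \<in> E\<^sup>*" by (rule walk_rtrancl[OF w(1)]) (use i in auto)
  ultimately show ?thesis using w ne i by (metis hd_conv_nth last_conv_nth)
qed

lemma reach_spath: "reach E u w \<Longrightarrow> \<exists>p. spath E u w p"
proof -
  assume "reach E u w"
  then obtain p where "walk E p \<and> hd p = u \<and> last p = w" unfolding reach_def by blast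
  from ex_has_least_nat[of "\<lambda>p. walk E p \<and> hd p = u \<and> last p = w", OF this, of length]
  show ?thesis unfolding spath_def by blast
qed

lemma on_sp_start: "reach E u w \<Longrightarrow> on_sp E u w u"
proof -
  assume "reach E u w"
  then obtain p where p: "spath E u w p" using reach_spath by metis
  then have "p \<noteq> []" "hd p = u" unfolding spath_def walk_def by auto
  then show ?thesis using p unfolding on_sp_def by (metis hd_in_set)
qed

lemma on_sp_end: "reach E u w \<Longrightarrow> on_sp E u w w"
proof -
  assume "reach E u w"
  then obtain p where p: "spath E u w p" using reach_spath by metis
  then have "p \<noteq> []" "last p = w" unfolding spath_def walk_def by auto
  then show ?thesis using p unfolding on_sp_def by (metis last_in_set)
qed

lemma walk_len3:
  assumes "walk E q" "hd q = u" "last q = w" "u \<noteq> w" "(u,w) \<notin> E"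
  shows "3 \<le> length q"
proof (rule ccontr)
  assume "\<not> 3 \<le> length q"
  moreover have "q \<noteq> []" using assms unfolding walk_def by simp
  ultimately have "length q = 1 \<or> length q = 2" by (cases "length q") auto
  then show False
  proof
    assume "length q = 1"
    then obtain a where "q = [a]" by (cases q) auto
    then show False using assms by simp
  next
    assume l: "length q = 2"
    then obtain a b where "q = [a,b]" by (cases q; cases "tl q") auto
    then show False using assms unfolding walk_def by auto
  qed
qed

lemma on_sp_mid:
  assumes "(u,v) \<in> E" "(v,w) \<in> E" "u \<noteq> w" "(u,w) \<notin> E"
  shows "on_sp E u w v"
proof -
  have "walk E [u,v,w]" using assms unfolding walk_def by (auto simp: less_Suc_eq nth_Cons')
  moreover have "\<forall>q. walk E q \<and> hd q = u \<and> last q = w \<longrightarrow> length [u,v,w] \<le> length q"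
    using walk_len3 assms by fastforce
  ultimately show ?thesis unfolding on_sp_def spath_def by force
qed

lemma reach_refl: "reach E u u"
  unfolding reach_def walk_def by (rule exI[of _ "[u]"]) simp

lemma reach_arc: "(u,w) \<in> E \<Longrightarrow> reach E u w"
  unfolding reach_def walk_def by (rule exI[of _ "[u,w]"]) simp

lemma reach_arc2: "(u,v) \<in> E \<Longrightarrow> (v,w) \<in> E \<Longrightarrow> reach E u w"
  unfolding reach_def walk_def by (rule exI[of _ "[u,v,w]"]) (auto simp: less_Suc_eq nth_Cons')



definition nn :: "nat \<Rightarrow> nat" where "nn k = 2*k+1+(k+1)*k"
definition Ms :: "nat \<Rightarrow> nat set" where "Ms k = {..k}"
definition Xs :: "nat \<Rightarrow> nat set" where "Xs k = {k+1..<2*k+1}"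
definition Bs :: "nat \<Rightarrow> nat set" where "Bs k = {2*k+1..<nn k}"
definition Vs :: "nat \<Rightarrow> nat set" where "Vs k = {..<nn k}"
definition Es :: "nat \<Rightarrow> (nat \<times> nat) set" where
  "Es k = {(x,m). x \<in> Xs k \<and> m \<in> Ms k} \<union> {(j, 2*k+1+j*k+l) | j l. j \<le> k \<and> l < k}"
definition Rs :: "nat \<Rightarrow> (nat \<times> nat) set" where
  "Rs k = {(u,w). u = w \<or> (u,w) \<in> Es k \<or> (u \<in> Xs k \<and> w \<in> Bs k)}"
definition hb :: "nat \<Rightarrow> nat \<Rightarrow> nat" where "hb k b = (b - (2*k+1)) div k"

lemma tgt_bound: "(j::nat) \<le> k \<Longrightarrow> l < k \<Longrightarrow> j*k+l < (k+1)*k"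
proof -
  assume a: "j \<le> k" "l < k"
  have "j*k \<le> k*k" by (rule mult_le_mono1[OF a(1)])
  moreover have "(k+1)*k = k*k + k" by simp
  ultimately show ?thesis using a by linarith
qed

lemma E_cases:
  assumes "(u,w) \<in> Es k"
  shows "(u \<in> Xs k \<and> w \<in> Ms k) \<or> (u \<in> Ms k \<and> w \<in> Bs k \<and> (\<exists>l<k. w = 2*k+1+u*k+l))"
  using assms tgt_bound[of u k] unfolding Es_def Xs_def Ms_def Bs_def nn_def by auto

lemma disj: "Xs k \<inter> Ms k = {}" "Xs k \<inter> Bs k = {}" "Ms k \<inter> Bs k = {}"
  unfolding Xs_def Ms_def Bs_def by auto

lemma E_sub: "Es k \<subseteq> Vs k \<times> Vs k"
proof
  fix p assume "p \<in> Es k"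
  then obtain u w where p: "p = (u,w)" "(u,w) \<in> Es k" by (cases p) auto
  then show "p \<in> Vs k \<times> Vs k" using E_cases[OF p(2)]
    unfolding Xs_def Ms_def Bs_def Vs_def nn_def by auto
qed

lemma rtrancl_R: "(u,w) \<in> (Es k)\<^sup>* \<Longrightarrow> (u,w) \<in> Rs k"
proof (induction rule: rtrancl_induct)
  case base then show ?case unfolding Rs_def by simp
next
  case (step y z)
  from step.hyps(2) have yz: "(y \<in> Xs k \<and> z \<in> Ms k) \<or> (y \<in> Ms k \<and> z \<in> Bs k)"
    using E_cases by blast
  from step.IH consider "u = y" | "(u,y) \<in> Es k" | "u \<in> Xs k \<and> y \<in> Bs k" unfolding Rs_def by blast
  then show ?case
  proof cases
    case 1 then show ?thesis using step.hyps(2) unfolding Rs_def by simp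
  next
    case 2
    then have "(u \<in> Xs k \<and> y \<in> Ms k) \<or> (u \<in> Ms k \<and> y \<in> Bs k)" using E_cases by blast
    then show ?thesis using yz disj unfolding Rs_def by blast
  next
    case 3 then show ?thesis using yz disj by blast
  qed
qed

lemma hb_facts:
  assumes "k \<ge> 1" "b \<in> Bs k"
  shows "hb k b \<in> Ms k" "(hb k b, b) \<in> Es k"
proof -
  define d where "d = b - (2*k+1)"
  have d: "d < (k+1)*k" "b = 2*k+1+d" using assms unfolding d_def Bs_def nn_def by auto
  have "d div k < k+1" using d(1) by (simp add: less_mult_imp_div_less)
  then show "hb k b \<in> Ms k" unfolding hb_def Ms_def d_def[symmetric] by simp
  have "d = d div k * k + d mod k" by simp
  moreover have "d mod k < k" using assms by simp
  ultimately show "(hb k b, b) \<in> Es k" using \<open>d div k < k+1\<close> d(2)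
    unfolding Es_def hb_def d_def[symmetric] by force
qed

lemma hb_eq: "k \<ge> 1 \<Longrightarrow> l < k \<Longrightarrow> hb k (2*k+1+j*k+l) = j"
  unfolding hb_def by simp

lemma card_sets: "card (Xs k) = k" "card (Ms k) = k+1" "card (Bs k) = (k+1)*k" "card (Vs k) = nn k"
  unfolding Xs_def Ms_def Bs_def Vs_def nn_def by auto

lemma finV: "finite (Vs k)" unfolding Vs_def by simp

lemma subV: "Xs k \<subseteq> Vs k" "Ms k \<subseteq> Vs k" "Bs k \<subseteq> Vs k"
  unfolding Xs_def Ms_def Bs_def Vs_def nn_def by auto

lemma V_split: "Vs k = Xs k \<union> Ms k \<union> Bs k"
  unfolding Xs_def Ms_def Bs_def Vs_def nn_def by auto



definition LfO :: "nat \<Rightarrow> nat \<Rightarrow> nat set" where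
  "LfO k v = (if v \<in> Xs k then insert v (Ms k) else {v})"
definition LbO :: "nat \<Rightarrow> nat \<Rightarrow> nat set" where
  "LbO k v = (if v \<in> Bs k then {v, hb k v} else {v})"

lemma opt_HHL: assumes "k \<ge> 1" shows "is_HHL (Vs k) (Es k) (LfO k) (LbO k)"
proof -
  have lab: "\<forall>v\<in>Vs k. LfO k v \<subseteq> Vs k \<and> LbO k v \<subseteq> Vs k"
    using subV[of k] hb_facts(1)[OF assms] unfolding LfO_def LbO_def by auto
  have cov: "covered (Es k) (LfO k) (LbO k) u w" if uw: "u \<in> Vs k" "w \<in> Vs k" "reach (Es k) u w" for u w
  proof -
    have "(u,w) \<in> Rs k" using rtrancl_R[OF reach_rtrancl[OF uw(3)]] .
    then consider "u = w" | "(u,w) \<in> Es k" | "u \<in> Xs k \<and> w \<in> Bs k" unfolding Rs_def by blast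
    then show ?thesis
    proof cases
      case 1
      then show ?thesis unfolding covered_def LfO_def LbO_def
        using on_sp_start[OF uw(3)] by auto
    next
      case 2
      from E_cases[OF this] show ?thesis
      proof
        assume a: "u \<in> Xs k \<and> w \<in> Ms k"
        then have "w \<in> LfO k u \<inter> LbO k w" using disj unfolding LfO_def LbO_def by auto
        then show ?thesis unfolding covered_def using on_sp_end[OF uw(3)] by blast
      next
        assume a: "u \<in> Ms k \<and> w \<in> Bs k \<and> (\<exists>l<k. w = 2*k+1+u*k+l)"
        then have "hb k w = u" using hb_eq[OF assms] by auto
        then have "u \<in> LfO k u \<inter> LbO k w" using a disj unfolding LfO_def LbO_def by auto
        then show ?thesis unfolding covered_def using on_sp_start[OF uw(3)] by blast
      qed
    next
      case 3
      then have h: "hb k w \<in> Ms k" "(hb k w, w) \<in> Es k" using hb_facts[OF assms] by auto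
      have "(u, hb k w) \<in> Es k" using 3 h unfolding Es_def by auto
      moreover have "(u,w) \<notin> Es k"
      proof
        assume "(u,w) \<in> Es k"
        from E_cases[OF this] 3 disj show False by blast
      qed
      moreover have "u \<noteq> w" using 3 disj(2) by blast
      ultimately have "on_sp (Es k) u w (hb k w)" using on_sp_mid[OF _ h(2)] by metis
      moreover have "hb k w \<in> LfO k u \<inter> LbO k w" using 3 h unfolding LfO_def LbO_def by auto
      ultimately show ?thesis unfolding covered_def by blast
    qed
  qed
  have bij: "bij_betw Suc (Vs k) {1..card (Vs k)}"
    unfolding card_sets Vs_def by (simp add: bij_betw_def image_Suc_lessThan)
  have hier: "\<forall>v\<in>Vs k. \<forall>u \<in> LfO k v \<union> LbO k v. Suc u \<le> Suc v"
  proof (intro ballI)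
    fix v u assume "v \<in> Vs k" "u \<in> LfO k v \<union> LbO k v"
    then show "Suc u \<le> Suc v" using hb_facts[OF assms, of v]
      unfolding LfO_def LbO_def Xs_def Ms_def Bs_def by (auto split: if_splits)
  qed
  have hl: "is_HL (Vs k) (Es k) (LfO k) (LbO k)" unfolding is_HL_def using lab cov by blast
  show ?thesis unfolding is_HHL_def using hl bij hier by (intro conjI exI[of _ Suc]) auto
qed

lemma opt_size: assumes "k \<ge> 1" shows "hl_size (Vs k) (LfO k) (LbO k) \<le> 4 * card (Vs k)"
proof -
  have b: "card (LfO k v) + card (LbO k v) \<le> (if v \<in> Xs k then k+4 else 3)" for v
  proof -
    have "card (LbO k v) \<le> 2" unfolding LbO_def by (auto simp: card_insert_le_m1)
    moreover have "card (LfO k v) \<le> (if v \<in> Xs k then k+2 else 1)"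
      unfolding LfO_def using card_sets(2)[of k]
      by (auto simp: card_insert_if Ms_def)
    ultimately show ?thesis by (auto split: if_splits)
  qed
  have "hl_size (Vs k) (LfO k) (LbO k) \<le> (\<Sum>v\<in>Vs k. (if v \<in> Xs k then k+4 else 3))"
    unfolding hl_size_def by (rule sum_mono) (rule b)
  also have "\<dots> = (\<Sum>v\<in>Vs k \<inter> Xs k. k+4) + (\<Sum>v\<in>Vs k \<inter> - Xs k. 3)"
    using sum.If_cases[OF finV, of "\<lambda>v. v \<in> Xs k" "\<lambda>_. k+4" "\<lambda>_. 3"] by simp
  also have "\<dots> = k*(k+4) + 3 * (nn k - k)"
  proof -
    have "Vs k \<inter> Xs k = Xs k" using subV by blast
    moreover have "card (Vs k \<inter> - Xs k) = nn k - k"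
    proof -
      have "Vs k \<inter> - Xs k = Vs k - Xs k" by blast
      then show ?thesis using card_Diff_subset[OF _ subV(1)] card_sets
        by (metis finite_subset finV subV(1))
    qed
    ultimately show ?thesis using card_sets by simp
  qed
  also have "\<dots> \<le> 4 * card (Vs k)" unfolding card_sets nn_def by (simp add: algebra_simps)
  finally show ?thesis .
qed



lemma center_sub: "center_edges V E Lf Lb v \<subseteq> V \<times> V"
  unfolding center_edges_def uncovered_def by auto

lemma center_fin: "finite V \<Longrightarrow> finite (center_edges V E Lf Lb v)"
  using center_sub finite_subset by (metis finite_SigmaI)

lemma X_notMB: "x \<in> Xs k \<Longrightarrow> x \<notin> Ms k \<and> x \<notin> Bs k"
  unfolding Xs_def Ms_def Bs_def by auto
lemma M_notXB: "x \<in> Ms k \<Longrightarrow> x \<notin> Xs k \<and> x \<notin> Bs k"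
  unfolding Xs_def Ms_def Bs_def by auto
lemma B_notXM: "x \<in> Bs k \<Longrightarrow> x \<notin> Xs k \<and> x \<notin> Ms k"
  unfolding Xs_def Ms_def Bs_def by auto
lemma E_cases2: "(u,w) \<in> Es k \<Longrightarrow> (u \<in> Xs k \<and> w \<in> Ms k) \<or> (u \<in> Ms k \<and> w \<in> Bs k)"
  using E_cases by meson
lemma E_tgt_notX: "(u,w) \<in> Es k \<Longrightarrow> w \<notin> Xs k"
  using E_cases2[of u w k] M_notXB B_notXM by blast
lemma E_src_notB: "(u,w) \<in> Es k \<Longrightarrow> u \<notin> Bs k"
  using E_cases2[of u w k] M_notXB X_notMB by blast
lemma E_src_XM: "(u,w) \<in> Es k \<Longrightarrow> u \<in> Xs k \<or> u \<in> Ms k"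
  using E_cases2[of u w k] by blast
lemma E_from_M: "(u,w) \<in> Es k \<Longrightarrow> u \<in> Ms k \<Longrightarrow> w \<in> (\<lambda>l. 2*k+1+u*k+l) ` {..<k}"
proof -
  assume a: "(u,w) \<in> Es k" "u \<in> Ms k"
  have "u \<notin> Xs k" using M_notXB a(2) by blast
  then obtain l where "l < k" "w = 2*k+1+u*k+l" using E_cases[OF a(1)] by blast
  then show ?thesis by blast
qed
lemma E_to_M: "(u,w) \<in> Es k \<Longrightarrow> w \<in> Ms k \<Longrightarrow> u \<in> Xs k"
  using E_cases2[of u w k] B_notXM by blast

lemma reach_X:
  assumes "k \<ge> 1" "x \<in> Xs k" "w \<in> insert x (Vs k - Xs k)"
  shows "reach (Es k) x w"
proof -
  have "w = x \<or> w \<in> Ms k \<or> w \<in> Bs k" using assms(3) V_split by auto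
  then show ?thesis
  proof (elim disjE)
    assume "w = x" then show ?thesis by (simp add: reach_refl)
  next
    assume "w \<in> Ms k" then show ?thesis using assms(2) by (intro reach_arc) (simp add: Es_def)
  next
    assume w: "w \<in> Bs k"
    have "(x, hb k w) \<in> Es k" using hb_facts(1)[OF assms(1) w] assms(2) by (simp add: Es_def)
    then show ?thesis using reach_arc2 hb_facts(2)[OF assms(1) w] by metis
  qed
qed

lemma count_X:
  assumes "k \<ge> 1" "x \<in> Xs k" "Lf x = {}"
  shows "nn k - k + 1 \<le> card (center_edges (Vs k) (Es k) Lf Lb x)"
proof -
  let ?W = "insert x (Vs k - Xs k)"
  have sub: "(\<lambda>w. (x,w)) ` ?W \<subseteq> center_edges (Vs k) (Es k) Lf Lb x"
  proof
    fix p assume "p \<in> (\<lambda>w. (x,w)) ` ?W"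
    then obtain w where w: "p = (x,w)" "w \<in> ?W" by blast
    have r: "reach (Es k) x w" using reach_X[OF assms(1,2) w(2)] .
    have "x \<in> Vs k" "w \<in> Vs k" using w(2) assms(2) subV by auto
    moreover have "\<not> covered (Es k) Lf Lb x w" using assms(3) unfolding covered_def by simp
    ultimately show "p \<in> center_edges (Vs k) (Es k) Lf Lb x"
      unfolding center_edges_def uncovered_def using w(1) r on_sp_start[OF r] by simp
  qed
  have "card ?W = nn k - k + 1"
  proof -
    have "card (Vs k - Xs k) = nn k - k" using card_Diff_subset[OF _ subV(1)] card_sets
      by (metis finite_subset finV subV(1))
    moreover have "finite (Vs k - Xs k)" using finV by simp
    ultimately show ?thesis using assms(2) by simp
  qed
  moreover have "card ((\<lambda>w. (x,w)) ` ?W) = card ?W" by (rule card_image) (simp add: inj_on_def)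
  ultimately show ?thesis using card_mono[OF center_fin[OF finV] sub] by simp
qed

lemma card_prod_le: "finite A \<Longrightarrow> finite B \<Longrightarrow> card A \<le> a \<Longrightarrow> card B \<le> b \<Longrightarrow> card (A \<times> B) \<le> a * b"
  by (simp add: card_cartesian_product mult_le_mono)

lemma count_nonX:
  assumes "k \<ge> 1" "v \<in> Vs k" "v \<notin> Xs k"
  shows "card (center_edges (Vs k) (Es k) Lf Lb v) \<le> (k+1)*(k+1)"
proof -
  have sub1: "center_edges (Vs k) (Es k) Lf Lb v \<subseteq> {u. (u,v) \<in> Rs k} \<times> {w. (v,w) \<in> Rs k}"
  proof
    fix p assume "p \<in> center_edges (Vs k) (Es k) Lf Lb v"
    then obtain u w where p: "p = (u,w)" "on_sp (Es k) u w v" unfolding center_edges_def by auto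
    then have "(u,v) \<in> (Es k)\<^sup>*" "(v,w) \<in> (Es k)\<^sup>*" using on_sp_rtrancl[OF p(2)] by blast+
    then show "p \<in> {u. (u,v) \<in> Rs k} \<times> {w. (v,w) \<in> Rs k}" using p rtrancl_R by blast
  qed
  have "v \<in> Ms k \<or> v \<in> Bs k" using assms V_split by auto
  then show ?thesis
  proof
    assume vM: "v \<in> Ms k"
    have A: "{u. (u,v) \<in> Rs k} \<subseteq> insert v (Xs k)"
    proof
      fix u assume "u \<in> {u. (u,v) \<in> Rs k}"
      then have "u = v \<or> (u,v) \<in> Es k \<or> (u \<in> Xs k \<and> v \<in> Bs k)" unfolding Rs_def by blast
      then show "u \<in> insert v (Xs k)" using E_to_M[of u v k] vM M_notXB by blast
    qed
    have B: "{w. (v,w) \<in> Rs k} \<subseteq> insert v ((\<lambda>l. 2*k+1+v*k+l) ` {..<k})"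
    proof
      fix w assume "w \<in> {w. (v,w) \<in> Rs k}"
      then have "w = v \<or> (v,w) \<in> Es k \<or> (v \<in> Xs k \<and> w \<in> Bs k)" unfolding Rs_def by blast
      then show "w \<in> insert v ((\<lambda>l. 2*k+1+v*k+l) ` {..<k})" using E_from_M[of v w k] vM M_notXB by blast
    qed
    have "card (insert v (Xs k)) \<le> k+1"
      using card_insert_le_m1 card_sets(1)[of k] by (simp add: card_insert_if Xs_def)
    moreover have "card (insert v ((\<lambda>l. 2*k+1+v*k+l) ` {..<k})) \<le> k+1"
    proof -
      have "card ((\<lambda>l. 2*k+1+v*k+l) ` {..<k}) \<le> k" using card_image_le[of "{..<k}"] by fastforce
      then show ?thesis by (simp add: card_insert_if)
    qed
    ultimately have "card (insert v (Xs k) \<times> insert v ((\<lambda>l. 2*k+1+v*k+l) ` {..<k})) \<le> (k+1)*(k+1)"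
      by (intro card_prod_le) (auto simp: Xs_def)
    moreover have "center_edges (Vs k) (Es k) Lf Lb v \<subseteq> insert v (Xs k) \<times> insert v ((\<lambda>l. 2*k+1+v*k+l) ` {..<k})"
      using sub1 A B by blast
    moreover have "finite (insert v (Xs k) \<times> insert v ((\<lambda>l. 2*k+1+v*k+l) ` {..<k}))"
      by (simp add: Xs_def)
    ultimately show ?thesis using card_mono le_trans by metis
  next
    assume vB: "v \<in> Bs k"
    have A: "{u. (u,v) \<in> Rs k} \<subseteq> insert v (Xs k \<union> Ms k)"
    proof
      fix u assume "u \<in> {u. (u,v) \<in> Rs k}"
      then have "u = v \<or> (u,v) \<in> Es k \<or> (u \<in> Xs k \<and> v \<in> Bs k)" unfolding Rs_def by blast
      then show "u \<in> insert v (Xs k \<union> Ms k)" using E_src_XM[of u v k] by blast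
    qed
    have B: "{w. (v,w) \<in> Rs k} \<subseteq> {v}"
    proof
      fix w assume "w \<in> {w. (v,w) \<in> Rs k}"
      then have "w = v \<or> (v,w) \<in> Es k \<or> (v \<in> Xs k \<and> w \<in> Bs k)" unfolding Rs_def by blast
      then show "w \<in> {v}" using E_src_notB[of v w k] vB B_notXM by blast
    qed
    have fin: "finite (insert v (Xs k \<union> Ms k))" by (simp add: Xs_def Ms_def)
    have "card (insert v (Xs k \<union> Ms k)) \<le> 1 + (k + (k+1))"
    proof -
      have "card (Xs k \<union> Ms k) \<le> k + (k+1)" using card_Un_le[of "Xs k" "Ms k"] card_sets by simp
      then show ?thesis using card_insert_le_m1 by (simp add: card_insert_if Xs_def Ms_def)
    qed
    then have "card (insert v (Xs k \<union> Ms k) \<times> {v}) \<le> (1 + (k + (k+1))) * 1"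
      by (intro card_prod_le) (auto simp: fin Xs_def Ms_def)
    moreover have "(1 + (k + (k+1))) * 1 \<le> (k+1)*(k+1)" using assms(1) by (simp add: algebra_simps)
    moreover have "center_edges (Vs k) (Es k) Lf Lb v \<subseteq> insert v (Xs k \<union> Ms k) \<times> {v}"
      using sub1 A B by blast
    moreover have "finite (insert v (Xs k \<union> Ms k) \<times> {v})" using fin by simp
    ultimately show ?thesis using card_mono le_trans by metis
  qed
qed

definition Inv :: "nat \<Rightarrow> nat ghhl_state \<Rightarrow> bool" where
  "Inv k st = (case st of (S,Lf,Lb) \<Rightarrow>
     (\<forall>x\<in>Xs k. x \<notin> S \<longrightarrow> Lf x = {}) \<and> (\<forall>x\<in>Xs k \<inter> S. \<forall>b\<in>Bs k. x \<in> Lb b) \<and> (\<forall>w. finite (Lb w)))"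

lemma Inv_step:
  assumes k: "k \<ge> 1" and st: "ghhl_step (Vs k) (Es k) st st'" and I: "Inv k st"
  shows "Inv k st'"
proof -
  obtain S Lf Lb where s: "st = (S,Lf,Lb)" by (cases st) auto
  let ?C = "center_edges (Vs k) (Es k) Lf Lb"
  from st s obtain v where v: "v \<in> Vs k - S" "\<forall>x \<in> Vs k - S. card (?C x) \<le> card (?C v)"
    and st': "st' = (insert v S,
                 (\<lambda>u. if u \<in> fst ` ?C v then insert v (Lf u) else Lf u),
                 (\<lambda>w. if w \<in> snd ` ?C v then insert v (Lb w) else Lb w))"
  proof -
    have "\<exists>v \<in> Vs k - S. (\<forall>x \<in> Vs k - S. card (?C x) \<le> card (?C v)) \<and>
          st' = (insert v S,
                 (\<lambda>u. if u \<in> fst ` ?C v then insert v (Lf u) else Lf u),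
                 (\<lambda>w. if w \<in> snd ` ?C v then insert v (Lb w) else Lb w))"
      using st unfolding s ghhl_step_def by simp
    then show ?thesis using that by blast
  qed
  have I1: "\<forall>x\<in>Xs k. x \<notin> S \<longrightarrow> Lf x = {}" and I2: "\<forall>x\<in>Xs k \<inter> S. \<forall>b\<in>Bs k. x \<in> Lb b"
    and I3: "\<forall>w. finite (Lb w)" using I s unfolding Inv_def by auto
  have vX: "v \<in> Xs k" if "x \<in> Xs k" "x \<notin> S" for x
  proof (rule ccontr)
    assume nv: "v \<notin> Xs k"
    have "nn k - k + 1 \<le> card (?C x)" using count_X[OF k that(1)] I1 that by blast
    also have "\<dots> \<le> card (?C v)" using v(2) that subV(1) by (meson DiffI subsetD)
    also have "\<dots> \<le> (k+1)*(k+1)" using count_nonX[OF k _ nv] v(1) by blast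
    finally show False unfolding nn_def by (simp add: algebra_simps)
  qed
  have P1: "\<forall>x\<in>Xs k. x \<notin> insert v S \<longrightarrow>
      (if x \<in> fst ` ?C v then insert v (Lf x) else Lf x) = {}"
  proof (intro ballI impI)
    fix x assume x: "x \<in> Xs k" "x \<notin> insert v S"
    then have vx: "v \<in> Xs k" using vX by blast
    have "x \<notin> fst ` ?C v"
    proof
      assume "x \<in> fst ` ?C v"
      then obtain w where "(x,w) \<in> ?C v" by force
      then have "on_sp (Es k) x w v" unfolding center_edges_def by simp
      then have "(x,v) \<in> Rs k" using on_sp_rtrancl rtrancl_R by metis
      then have "x = v \<or> (x,v) \<in> Es k \<or> (x \<in> Xs k \<and> v \<in> Bs k)" unfolding Rs_def by blast
      then show False using x E_tgt_notX[of x v k] vx X_notMB by blast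
    qed
    then show "(if x \<in> fst ` ?C v then insert v (Lf x) else Lf x) = {}" using I1 x by simp
  qed
  have P2: "\<forall>x\<in>Xs k \<inter> insert v S. \<forall>b\<in>Bs k.
      x \<in> (if b \<in> snd ` ?C v then insert v (Lb b) else Lb b)"
  proof (intro ballI)
    fix x b assume x: "x \<in> Xs k \<inter> insert v S" and b: "b \<in> Bs k"
    show "x \<in> (if b \<in> snd ` ?C v then insert v (Lb b) else Lb b)"
    proof (cases "x \<in> S")
      case True then show ?thesis using I2 x b by auto
    next
      case False
      then have xv: "x = v" "v \<notin> S" "v \<in> Xs k" using x v by auto
      have "b \<in> insert v (Vs k - Xs k)" using b subV(3)[of k] B_notXM[OF b] by blast
      then have r: "reach (Es k) v b" by (rule reach_X[OF k xv(3)])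
      have "Lf v = {}" using I1 xv by blast
      then have "(v,b) \<in> ?C v" unfolding center_edges_def uncovered_def covered_def
        using r on_sp_start[OF r] v(1) b subV(3)[of k] by auto
      then have "b \<in> snd ` ?C v" by force
      then show ?thesis using xv by simp
    qed
  qed
  show ?thesis unfolding st' Inv_def using P1 P2 I3 by simp
qed

lemma inv_rtranclp:
  assumes "r\<^sup>*\<^sup>* a b" "P a" "\<And>y z. r y z \<Longrightarrow> P y \<Longrightarrow> P z"
  shows "P b"
  using assms(1,2) by (induct rule: rtranclp.induct) (use assms(3) in blast)+

lemma Inv_run:
  assumes k: "k \<ge> 1" and r: "(ghhl_step (Vs k) (Es k))\<^sup>*\<^sup>* a b" and I: "Inv k a"
  shows "Inv k b"
  by (rule inv_rtranclp[where P="Inv k", OF r I]) (rule Inv_step[OF k])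

lemma greedy_lb:
  assumes k: "k \<ge> 1" and out: "ghhl_output (Vs k) (Es k) Lf Lb"
  shows "(k+1)*k*k \<le> hl_size (Vs k) Lf Lb"
proof -
  obtain S where r: "(ghhl_step (Vs k) (Es k))\<^sup>*\<^sup>* ({}, (\<lambda>_. {}), (\<lambda>_. {})) (S, Lf, Lb)"
    and u: "uncovered (Vs k) (Es k) Lf Lb = {}" using out unfolding ghhl_output_def by blast
  have "Inv k (S,Lf,Lb)" by (rule Inv_run[OF k r]) (simp add: Inv_def)
  then have I1: "\<forall>x\<in>Xs k. x \<notin> S \<longrightarrow> Lf x = {}" and I2: "\<forall>x\<in>Xs k \<inter> S. \<forall>b\<in>Bs k. x \<in> Lb b"
    and I3: "\<forall>w. finite (Lb w)" unfolding Inv_def by auto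
  have XS: "Xs k \<subseteq> S"
  proof
    fix x assume x: "x \<in> Xs k"
    show "x \<in> S"
    proof (rule ccontr)
      assume "x \<notin> S"
      then have "Lf x = {}" using I1 x by blast
      then have "(x,x) \<in> uncovered (Vs k) (Es k) Lf Lb"
        unfolding uncovered_def covered_def using x subV reach_refl by auto
      then show False using u by simp
    qed
  qed
  have "(k+1)*k*k = (\<Sum>b\<in>Bs k. k)" using card_sets by simp
  also have "\<dots> \<le> (\<Sum>b\<in>Bs k. card (Lb b))"
  proof (rule sum_mono)
    fix b assume b: "b \<in> Bs k"
    have "Xs k \<subseteq> Lb b" using I2 XS b by blast
    then show "k \<le> card (Lb b)" using card_mono[OF I3[rule_format]] card_sets by metis
  qed
  also have "\<dots> \<le> (\<Sum>b\<in>Vs k. card (Lb b))" by (rule sum_mono2[OF finV subV(3)]) simp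
  also have "\<dots> \<le> hl_size (Vs k) Lf Lb" unfolding hl_size_def by (rule sum_mono) simp
  finally show ?thesis .
qed


lemma real_bound:
  assumes "k \<ge> (1::nat)"
  shows "real (nn k) powr (3/2) \<le> 15 * real ((k+1)*k*k)"
proof -
  have n: "real (nn k) = real k ^ 2 + 3 * real k + 1" unfolding nn_def by (simp add: algebra_simps power2_eq_square)
  have k1: "real k \<ge> 1" using assms by simp
  have kk: "real k * 1 \<le> real k * real k" using k1 by (intro mult_left_mono) auto
  have n5: "real (nn k) \<le> 5 * real k ^ 2" using n k1 kk unfolding power2_eq_square by linarith
  have s: "sqrt (real (nn k)) \<le> 3 * real k"
    by (rule real_le_lsqrt) (use n5 k1 in \<open>auto simp: power2_eq_square\<close>)
  have "real (nn k) powr (3/2) = real (nn k) powr (1 + 1/2)" by simp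
  also have "\<dots> = real (nn k) * sqrt (real (nn k))"
    unfolding powr_add by (simp add: powr_half_sqrt)
  also have "\<dots> \<le> (5 * real k ^ 2) * (3 * real k)"
    by (rule mult_mono[OF n5 s]) auto
  also have "\<dots> \<le> 15 * real ((k+1)*k*k)" using k1 by (simp add: power2_eq_square algebra_simps)
  finally show ?thesis .
qed

theorem mainTheorem7:
  shows "\<exists>c::real. c > 0 \<and> (\<exists>C::real. \<forall>N::nat.
     \<exists>(V::nat set) (E::(nat \<times> nat) set).
        finite V \<and> card V \<ge> N \<and> E \<subseteq> V \<times> V \<and>
        (\<forall>Lf Lb. ghhl_output V E Lf Lb \<longrightarrow>
            real (hl_size V Lf Lb) \<ge> c * real (card V) powr (3/2)) \<and>
        (\<exists>Lf Lb. is_HHL V E Lf Lb \<and> real (hl_size V Lf Lb) \<le> C * real (card V)))"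
proof (rule exI[of _ "1/15"], rule conjI, simp, rule exI[of _ 4], rule allI)
  fix N :: nat
  define k where "k = N + 1"
  have k: "k \<ge> 1" unfolding k_def by simp
  show "\<exists>(V::nat set) (E::(nat \<times> nat) set).
        finite V \<and> card V \<ge> N \<and> E \<subseteq> V \<times> V \<and>
        (\<forall>Lf Lb. ghhl_output V E Lf Lb \<longrightarrow>
            real (hl_size V Lf Lb) \<ge> 1/15 * real (card V) powr (3/2)) \<and>
        (\<exists>Lf Lb. is_HHL V E Lf Lb \<and> real (hl_size V Lf Lb) \<le> 4 * real (card V))"
  proof (rule exI[of _ "Vs k"], rule exI[of _ "Es k"], intro conjI allI impI)
    show "finite (Vs k)" by (rule finV)
    show "N \<le> card (Vs k)" unfolding card_sets nn_def k_def by simp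
    show "Es k \<subseteq> Vs k \<times> Vs k" by (rule E_sub)
    have "real (hl_size (Vs k) (LfO k) (LbO k)) \<le> 4 * real (card (Vs k))"
      using opt_size[OF k] by (simp only: of_nat_le_iff[symmetric] of_nat_mult)
    then show "\<exists>Lf Lb. is_HHL (Vs k) (Es k) Lf Lb \<and> real (hl_size (Vs k) Lf Lb) \<le> 4 * real (card (Vs k))"
      using opt_HHL[OF k] by blast
    fix Lf Lb assume o: "ghhl_output (Vs k) (Es k) Lf Lb"
    have "real ((k+1)*k*k) \<le> real (hl_size (Vs k) Lf Lb)" using greedy_lb[OF k o] by (simp only: of_nat_le_iff)
    then show "1/15 * real (card (Vs k)) powr (3/2) \<le> real (hl_size (Vs k) Lf Lb)"
      using real_bound[OF k] unfolding card_sets by simp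
  qed
qed

end
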